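(* Every subalgebra of a regular Lie algebra (finite-dimensional, over an infinite field $K$) is regular.
   Context: All algebras are finite-dimensional over an infinite field $K$. For $x\in L$ write $\chi_{\operatorname{ad} x}(t)=\det(t-\operatorname{ad}x)=\sum_{i}a_i(x)t^i$. The rank $\operatorname{rk}L$ is the minimal $r$ such that $a_r(x)\neq 0$ for some $x\in L$. An element $x$ is regular if $a_{\operatorname{rk}L}(x)\neq 0$. A Lie algebra is regular if each of its nonzero elements is regular. *)

theory Defs
  imports Main "Jordan_Normal_Form.Char_Poly"
begin

text \<open>A Lie algebra is modelled as a subset L of an ambient K-vector space
  (given by the scalar multiplication scale), with a bracket br.
  Everything is relativised to the carrier L.\<close>

definition fin_dim :: "('k::field \<Rightarrow> 'v::ab_group_add \<Rightarrow> 'v) \<Rightarrow> 'v set \<Rightarrow> bool" where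
  "fin_dim scale L \<longleftrightarrow> (\<exists>B. finite B \<and> B \<subseteq> L \<and> module.span scale B = L)"

definition lie_algebra ::
  "('k::field \<Rightarrow> 'v::ab_group_add \<Rightarrow> 'v) \<Rightarrow> ('v \<Rightarrow> 'v \<Rightarrow> 'v) \<Rightarrow> 'v set \<Rightarrow> bool" where
  "lie_algebra scale br L \<longleftrightarrow>
     module.subspace scale L \<and> fin_dim scale L \<and>
     (\<forall>x\<in>L. \<forall>y\<in>L. br x y \<in> L) \<and>
     (\<forall>x\<in>L. \<forall>y\<in>L. \<forall>z\<in>L. br (x + y) z = br x z + br y z) \<and>
     (\<forall>x\<in>L. \<forall>y\<in>L. \<forall>z\<in>L. br x (y + z) = br x y + br x z) \<and>
     (\<forall>c. \<forall>x\<in>L. \<forall>y\<in>L. br (scale c x) y = scale c (br x y)) \<and>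
     (\<forall>c. \<forall>x\<in>L. \<forall>y\<in>L. br x (scale c y) = scale c (br x y)) \<and>
     (\<forall>x\<in>L. br x x = 0) \<and>
     (\<forall>x\<in>L. \<forall>y\<in>L. \<forall>z\<in>L. br x (br y z) + br y (br z x) + br z (br x y) = 0)"

definition lie_subalgebra ::
  "('k::field \<Rightarrow> 'v::ab_group_add \<Rightarrow> 'v) \<Rightarrow> ('v \<Rightarrow> 'v \<Rightarrow> 'v) \<Rightarrow> 'v set \<Rightarrow> 'v set \<Rightarrow> bool" where
  "lie_subalgebra scale br S L \<longleftrightarrow>
     S \<subseteq> L \<and> module.subspace scale S \<and> (\<forall>x\<in>S. \<forall>y\<in>S. br x y \<in> S)"

definition some_basis :: "('k::field \<Rightarrow> 'v::ab_group_add \<Rightarrow> 'v) \<Rightarrow> 'v set \<Rightarrow> 'v list" where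
  "some_basis scale S = (SOME bs. distinct bs \<and> module.independent scale (set bs)
                                  \<and> module.span scale (set bs) = S)"

definition endo_matrix ::
  "('k::field \<Rightarrow> 'v::ab_group_add \<Rightarrow> 'v) \<Rightarrow> 'v set \<Rightarrow> ('v \<Rightarrow> 'v) \<Rightarrow> 'k mat" where
  "endo_matrix scale S f =
     (let bs = some_basis scale S
      in mat (length bs) (length bs)
           (\<lambda>(i, j). module.representation scale (set bs) (f (bs ! j)) (bs ! i)))"

definition chi_ad ::
  "('k::field \<Rightarrow> 'v::ab_group_add \<Rightarrow> 'v) \<Rightarrow> ('v \<Rightarrow> 'v \<Rightarrow> 'v) \<Rightarrow> 'v set \<Rightarrow> 'v \<Rightarrow> 'k poly" where
  "chi_ad scale br L x = char_poly (endo_matrix scale L (br x))"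

definition lie_rank ::
  "('k::field \<Rightarrow> 'v::ab_group_add \<Rightarrow> 'v) \<Rightarrow> ('v \<Rightarrow> 'v \<Rightarrow> 'v) \<Rightarrow> 'v set \<Rightarrow> nat" where
  "lie_rank scale br L = (LEAST r. \<exists>x\<in>L. coeff (chi_ad scale br L x) r \<noteq> 0)"

definition regular_element ::
  "('k::field \<Rightarrow> 'v::ab_group_add \<Rightarrow> 'v) \<Rightarrow> ('v \<Rightarrow> 'v \<Rightarrow> 'v) \<Rightarrow> 'v set \<Rightarrow> 'v \<Rightarrow> bool" where
  "regular_element scale br L x \<longleftrightarrow> coeff (chi_ad scale br L x) (lie_rank scale br L) \<noteq> 0"

definition regular_lie_algebra ::
  "('k::field \<Rightarrow> 'v::ab_group_add \<Rightarrow> 'v) \<Rightarrow> ('v \<Rightarrow> 'v \<Rightarrow> 'v) \<Rightarrow> 'v set \<Rightarrow> bool" where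
  "regular_lie_algebra scale br L \<longleftrightarrow> (\<forall>x\<in>L. x \<noteq> 0 \<longrightarrow> regular_element scale br L x)"

end

theory Submission
  imports Defs
begin

definition blist :: "('k::field \<Rightarrow> 'v::ab_group_add \<Rightarrow> 'v) \<Rightarrow> 'v list \<Rightarrow> 'v set \<Rightarrow> bool" where
  "blist scale bs V \<longleftrightarrow> distinct bs \<and> module.independent scale (set bs) \<and> module.span scale (set bs) = V"

definition linon :: "('k::field \<Rightarrow> 'v::ab_group_add \<Rightarrow> 'v) \<Rightarrow> 'v set \<Rightarrow> ('v \<Rightarrow> 'v) \<Rightarrow> bool" where
  "linon scale V f \<longleftrightarrow> (\<forall>u\<in>V. f u \<in> V) \<and> (\<forall>u\<in>V. \<forall>w\<in>V. f (u + w) = f u + f w)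
      \<and> (\<forall>c. \<forall>u\<in>V. f (scale c u) = scale c (f u))"

definition bmat :: "('k::field \<Rightarrow> 'v::ab_group_add \<Rightarrow> 'v) \<Rightarrow> 'v list \<Rightarrow> ('v \<Rightarrow> 'v) \<Rightarrow> 'k mat" where
  "bmat scale bs f = mat (length bs) (length bs) (\<lambda>(i,j). module.representation scale (set bs) (f (bs!j)) (bs!i))"

definition cmat :: "('k::field \<Rightarrow> 'v::ab_group_add \<Rightarrow> 'v) \<Rightarrow> 'v list \<Rightarrow> 'v list \<Rightarrow> 'k mat" where
  "cmat scale bs cs = mat (length bs) (length cs) (\<lambda>(i,j). module.representation scale (set bs) (cs!j) (bs!i))"

context vector_space begin

lemma blist_sub: "blist scale bs V \<Longrightarrow> subspace V"
  unfolding blist_def by (auto simp: subspace_span)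

lemma blist_in: "blist scale bs V \<Longrightarrow> k < length bs \<Longrightarrow> bs ! k \<in> V"
  unfolding blist_def by (auto intro: span_base)

lemma expand:
  assumes "blist scale bs V" "v \<in> V"
  shows "v = (\<Sum>k<length bs. representation (set bs) v (bs!k) *s bs!k)"
proof -
  have d: "distinct bs" and i: "independent (set bs)" and s: "span (set bs) = V"
    using assms(1) unfolding blist_def by auto
  have "(\<Sum>b\<in>set bs. representation (set bs) v b *s b) = v"
    by (rule sum_representation_eq) (use i s assms(2) in auto)
  moreover have "(\<Sum>k<length bs. representation (set bs) v (bs!k) *s bs!k) = (\<Sum>b\<in>set bs. representation (set bs) v b *s b)"
    by (rule sum.reindex_bij_betw[OF bij_betw_nth[OF d]]) auto
  ultimately show ?thesis by simp
qed

lemma lin_sum: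
  assumes "linon scale V f" "subspace V" "finite I" "\<And>k. k \<in> I \<Longrightarrow> u k \<in> V"
  shows "f (\<Sum>k\<in>I. a k *s u k) = (\<Sum>k\<in>I. a k *s f (u k))"
  using assms(3,4)
proof (induction I rule: finite_induct)
  case empty
  have "f 0 = f (0 *s 0)" by simp
  also have "\<dots> = 0 *s f 0" using assms(1,2) subspace_0 unfolding linon_def by blast
  finally show ?case by simp
next
  case (insert x F)
  have "(\<Sum>k\<in>F. a k *s u k) \<in> V" using insert assms(2)
    by (intro subspace_sum subspace_scale) auto
  moreover have "a x *s u x \<in> V" using insert assms(2) by (auto intro: subspace_scale)
  ultimately show ?case using insert assms(1) unfolding linon_def by auto
qed

lemma keyG:
  assumes bs: "blist scale bs V" and cs: "blist scale cs V" and f: "linon scale V f" and v: "v \<in> V"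
  shows "representation (set bs) (f v) b =
     (\<Sum>k<length cs. representation (set cs) v (cs!k) * representation (set bs) (f (cs!k)) b)"
proof -
  have V: "subspace V" using blist_sub[OF bs] .
  have i: "independent (set bs)" and s: "span (set bs) = V" using bs unfolding blist_def by auto
  have fc: "k < length cs \<Longrightarrow> f (cs!k) \<in> V" for k using f blist_in[OF cs] unfolding linon_def by auto
  have "f v = f (\<Sum>k<length cs. representation (set cs) v (cs!k) *s cs!k)"
    using expand[OF cs v] by simp
  also have "\<dots> = (\<Sum>k<length cs. representation (set cs) v (cs!k) *s f (cs!k))"
    by (rule lin_sum[OF f V]) (auto intro: blist_in[OF cs])
  finally have "representation (set bs) (f v) b =
     representation (set bs) (\<Sum>k<length cs. representation (set cs) v (cs!k) *s f (cs!k)) b" by simp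
  also have "\<dots> = (\<Sum>k<length cs. representation (set bs) (representation (set cs) v (cs!k) *s f (cs!k)) b)"
    by (subst representation_sum[OF i]) (use fc s V in \<open>auto intro: subspace_scale\<close>)
  also have "\<dots> = (\<Sum>k<length cs. representation (set cs) v (cs!k) * representation (set bs) (f (cs!k)) b)"
    by (rule sum.cong[OF refl], subst representation_scale[OF i]) (use fc s in auto)
  finally show ?thesis .
qed

end

context vector_space begin

lemma rep_nth:
  assumes "blist scale bs V" "i < length bs" "j < length bs"
  shows "representation (set bs) (bs!j) (bs!i) = (if i = j then 1 else 0)"
  using assms representation_basis[of "set bs" "bs!j"] nth_eq_iff_index_eq[of bs i j]
  unfolding blist_def by auto

lemma len_eq:
  assumes "blist scale bs V" "blist scale cs V"
  shows "length bs = length cs"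
proof -
  have "card (set bs) = dim V"
    using assms(1) unfolding blist_def by (intro basis_card_eq_dim) (auto intro: span_base)
  moreover have "card (set cs) = dim V"
    using assms(2) unfolding blist_def by (intro basis_card_eq_dim) (auto intro: span_base)
  ultimately
  show ?thesis using assms by (auto simp: blist_def distinct_card)
qed

lemma linon_id: "subspace V \<Longrightarrow> linon scale V id"
  unfolding linon_def by auto

lemma cmat_inv:
  assumes bs: "blist scale bs V" and cs: "blist scale cs V"
  shows "cmat scale bs cs * cmat scale cs bs = 1\<^sub>m (length bs)"
proof (rule eq_matI)
  have l: "length cs = length bs" using len_eq[OF bs cs] by simp
  fix i j assume i: "i < dim_row (1\<^sub>m (length bs))" and j: "j < dim_col (1\<^sub>m (length bs))"
  hence i: "i < length bs" and j: "j < length bs" by auto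
  have "(cmat scale bs cs * cmat scale cs bs) $$ (i, j) =
     (\<Sum>k<length cs. representation (set cs) (bs!j) (cs!k) * representation (set bs) (id (cs!k)) (bs!i))"
    using i j l unfolding cmat_def
    by (auto simp: scalar_prod_def lessThan_atLeast0 intro!: sum.cong)
  also have "\<dots> = representation (set bs) (id (bs!j)) (bs!i)"
    by (rule keyG[OF bs cs linon_id[OF blist_sub[OF bs]] blist_in[OF bs j], symmetric])
  also have "\<dots> = 1\<^sub>m (length bs) $$ (i,j)" using rep_nth[OF bs i j] i j by simp
  finally show "(cmat scale bs cs * cmat scale cs bs) $$ (i, j) = 1\<^sub>m (length bs) $$ (i,j)" .
qed (auto simp: cmat_def)

lemma bmat_comm:
  assumes bs: "blist scale bs V" and cs: "blist scale cs V" and f: "linon scale V f"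
  shows "bmat scale bs f * cmat scale bs cs = cmat scale bs cs * bmat scale cs f"
proof (rule eq_matI)
  have l: "length cs = length bs" using len_eq[OF bs cs] by simp
  fix i j assume i: "i < dim_row (cmat scale bs cs * bmat scale cs f)"
    and j: "j < dim_col (cmat scale bs cs * bmat scale cs f)"
  hence i: "i < length bs" and j: "j < length bs" using l by (auto simp: cmat_def bmat_def)
  have fc: "f (cs!j) \<in> V" using f blist_in[OF cs] j l unfolding linon_def by auto
  have "(bmat scale bs f * cmat scale bs cs) $$ (i, j) =
     (\<Sum>k<length bs. representation (set bs) (cs!j) (bs!k) * representation (set bs) (f (bs!k)) (bs!i))"
    using i j l unfolding cmat_def bmat_def
    by (auto simp: scalar_prod_def lessThan_atLeast0 mult.commute intro!: sum.cong)
  also have "\<dots> = representation (set bs) (f (cs!j)) (bs!i)"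
    by (rule keyG[OF bs bs f blist_in[OF cs], symmetric]) (use j l in auto)
  also have "\<dots> = representation (set bs) (id (f (cs!j))) (bs!i)" by simp
  also have "\<dots> = (\<Sum>k<length cs. representation (set cs) (f (cs!j)) (cs!k) * representation (set bs) (id (cs!k)) (bs!i))"
    by (rule keyG[OF bs cs linon_id[OF blist_sub[OF bs]] fc])
  also have "\<dots> = (cmat scale bs cs * bmat scale cs f) $$ (i, j)"
    using i j l unfolding cmat_def bmat_def
    by (auto simp: scalar_prod_def lessThan_atLeast0 mult.commute intro!: sum.cong)
  finally show "(bmat scale bs f * cmat scale bs cs) $$ (i, j) = (cmat scale bs cs * bmat scale cs f) $$ (i, j)" .
qed (use len_eq[OF bs cs] in \<open>auto simp: cmat_def bmat_def\<close>)

lemma char_poly_bmat: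
  assumes bs: "blist scale bs V" and cs: "blist scale cs V" and f: "linon scale V f"
  shows "char_poly (bmat scale bs f) = char_poly (bmat scale cs f)"
proof (rule char_poly_similar)
  let ?n = "length bs"
  have l: "length cs = ?n" using len_eq[OF bs cs] by simp
  have C: "bmat scale bs f \<in> carrier_mat ?n ?n" "bmat scale cs f \<in> carrier_mat ?n ?n"
     "cmat scale bs cs \<in> carrier_mat ?n ?n" "cmat scale cs bs \<in> carrier_mat ?n ?n"
    using l by (auto simp: bmat_def cmat_def)
  have PQ: "cmat scale bs cs * cmat scale cs bs = 1\<^sub>m ?n" by (rule cmat_inv[OF bs cs])
  have QP: "cmat scale cs bs * cmat scale bs cs = 1\<^sub>m ?n" using cmat_inv[OF cs bs] l by simp
  have "bmat scale bs f = bmat scale bs f * (cmat scale bs cs * cmat scale cs bs)"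
    using PQ C by simp
  also have "\<dots> = (bmat scale bs f * cmat scale bs cs) * cmat scale cs bs"
    using C by (simp add: assoc_mult_mat)
  also have "\<dots> = cmat scale bs cs * bmat scale cs f * cmat scale cs bs"
    using bmat_comm[OF bs cs f] by simp
  finally have "bmat scale bs f = cmat scale bs cs * bmat scale cs f * cmat scale cs bs" .
  thus "similar_mat (bmat scale bs f) (bmat scale cs f)"
    unfolding similar_mat_def similar_mat_wit_def Let_def using C PQ QP
    by (intro exI[of _ "cmat scale bs cs"] exI[of _ "cmat scale cs bs"]) (auto simp: bmat_def)
qed

end

lemma char_poly_block:
  fixes A :: "'a::idom mat"
  assumes A: "A \<in> carrier_mat m m" and B: "B \<in> carrier_mat m d" and D: "D \<in> carrier_mat d d"
  shows "char_poly (four_block_mat A B (0\<^sub>m d m) D) = char_poly A * char_poly D"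
proof -
  have "char_poly_matrix (four_block_mat A B (0\<^sub>m d m) D) =
    four_block_mat (char_poly_matrix A) (map_mat (\<lambda>a. [:-a:]) B) (0\<^sub>m d m) (char_poly_matrix D)"
    using A B D by (intro eq_matI) (auto simp: char_poly_matrix_def)
  thus ?thesis unfolding char_poly_def using A B D
    by (simp add: det_four_block_mat_lower_left_zero[of _ m _ d])
qed

context vector_space begin

lemma bmat_block:
  assumes c: "blist scale (bs @ e) L" and b: "blist scale bs S" and f: "linon scale L f"
    and fS: "\<And>v. v \<in> S \<Longrightarrow> f v \<in> S"
  defines "M \<equiv> bmat scale (bs @ e) f"
  shows "M = four_block_mat (bmat scale bs f)
      (mat (length bs) (length e) (\<lambda>(i,j). M $$ (i, j + length bs))) (0\<^sub>m (length e) (length bs))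
      (mat (length e) (length e) (\<lambda>(i,j). M $$ (i + length bs, j + length bs)))"
proof (rule eq_matI)
  let ?m = "length bs"
  have ic: "independent (set (bs @ e))" and dc: "distinct (bs @ e)" using c unfolding blist_def by auto
  have sb: "span (set bs) = S" using b unfolding blist_def by auto
  fix i j assume "i < dim_row (four_block_mat (bmat scale bs f)
      (mat (length bs) (length e) (\<lambda>(i,j). M $$ (i, j + length bs))) (0\<^sub>m (length e) (length bs))
      (mat (length e) (length e) (\<lambda>(i,j). M $$ (i + length bs, j + length bs))))"
    "j < dim_col (four_block_mat (bmat scale bs f)
      (mat (length bs) (length e) (\<lambda>(i,j). M $$ (i, j + length bs))) (0\<^sub>m (length e) (length bs))
      (mat (length e) (length e) (\<lambda>(i,j). M $$ (i + length bs, j + length bs))))"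
  hence i: "i < ?m + length e" and j: "j < ?m + length e" by (auto simp: bmat_def)
  show "M $$ (i,j) = four_block_mat (bmat scale bs f)
      (mat (length bs) (length e) (\<lambda>(i,j). M $$ (i, j + length bs))) (0\<^sub>m (length e) (length bs))
      (mat (length e) (length e) (\<lambda>(i,j). M $$ (i + length bs, j + length bs))) $$ (i,j)"
  proof (cases "j < ?m")
    case True
    have fj: "f (bs!j) \<in> span (set bs)" using fS blist_in[OF b True] sb by auto
    have ext: "representation (set (bs @ e)) (f (bs!j)) = representation (set bs) (f (bs!j))"
      by (rule representation_extend[OF ic fj]) auto
    have Mij: "M $$ (i,j) = representation (set bs) (f (bs!j)) ((bs @ e)!i)"
      using i j True ext unfolding M_def bmat_def by (simp add: nth_append)
    show ?thesis
    proof (cases "i < ?m")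
      case True2: True
      thus ?thesis using Mij True i j by (simp add: bmat_def nth_append)
    next
      case False
      have "(bs @ e) ! i \<notin> set bs"
      proof
        assume "(bs @ e) ! i \<in> set bs"
        then obtain k where k: "k < ?m" "bs ! k = (bs @ e) ! i" by (auto simp: in_set_conv_nth)
        hence "(bs @ e) ! k = (bs @ e) ! i" by (simp add: nth_append)
        with nth_eq_iff_index_eq[OF dc, of k i] k i False show False by simp
      qed
      hence "M $$ (i,j) = 0" using Mij representation_ne_zero[of "set bs" "f (bs!j)" "(bs @ e) ! i"] by auto
      thus ?thesis using False True i j by (simp add: bmat_def)
    qed
  next
    case False
    thus ?thesis using i j by (auto simp: bmat_def M_def)
  qed
qed (auto simp: bmat_def M_def)

end

lemma char_poly_line:
  fixes A B :: "'a::field mat"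
  assumes A: "A \<in> carrier_mat n n" and B: "B \<in> carrier_mat n n"
  shows "\<exists>p. \<forall>t. coeff (char_poly (mat n n (\<lambda>ij. (1 - t) * A $$ ij + t * B $$ ij))) k = poly p t"
proof (intro exI allI)
  fix t :: 'a
  let ?N = "mat n n (\<lambda>ij. [:A $$ ij, B $$ ij - A $$ ij:])"
  interpret h: comm_ring_hom "\<lambda>p. poly p t" by (rule poly_hom.comm_ring_hom_axioms)
  have N: "?N \<in> carrier_mat n n" by simp
  have "map_mat (\<lambda>p. poly p t) ?N = mat n n (\<lambda>ij. (1 - t) * A $$ ij + t * B $$ ij)"
    by (rule eq_matI) (auto simp: algebra_simps)
  hence "char_poly (mat n n (\<lambda>ij. (1 - t) * A $$ ij + t * B $$ ij)) = map_poly (\<lambda>p. poly p t) (char_poly ?N)"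
    using comm_ring_hom.char_poly_hom[OF poly_hom.comm_ring_hom_axioms N, of t] by simp
  thus "coeff (char_poly (mat n n (\<lambda>ij. (1 - t) * A $$ ij + t * B $$ ij))) k = poly (coeff (char_poly ?N) k) t"
    by (simp add: coeff_map_poly)
qed

context vector_space begin

lemma some_basis_ok:
  assumes "subspace V" "V \<subseteq> L" "fin_dim scale L"
  shows "blist scale (some_basis scale V) V"
proof -
  obtain B0 where B0: "finite B0" "B0 \<subseteq> L" "span B0 = L" using assms(3) unfolding fin_dim_def by auto
  obtain B where B: "B \<subseteq> V" "independent B" "V \<subseteq> span B" by (rule maximal_independent_subset)
  have "finite B" using independent_span_bound[OF B0(1) B(2)] B(1) assms(2) B0(3) by auto
  then obtain xs where xs: "set xs = B" "distinct xs" using finite_distinct_list by blast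
  have "span B = V" by (rule span_subspace) (use B assms(1) in auto)
  hence "blist scale xs V" using xs B unfolding blist_def by auto
  hence "\<exists>bs. distinct bs \<and> independent (set bs) \<and> span (set bs) = V" unfolding blist_def by blast
  from someI_ex[OF this] show ?thesis unfolding some_basis_def blist_def .
qed

lemma basis_extend:
  assumes "blist scale bs S" "S \<subseteq> L" "subspace L" "fin_dim scale L"
  shows "\<exists>e. blist scale (bs @ e) L"
proof -
  obtain B0 where B0: "finite B0" "B0 \<subseteq> L" "span B0 = L" using assms(4) unfolding fin_dim_def by auto
  have bsL: "set bs \<subseteq> L" using assms(1,2) unfolding blist_def by (auto intro: span_base)
  have ib: "independent (set bs)" using assms(1) unfolding blist_def by auto
  obtain B where B: "set bs \<subseteq> B" "B \<subseteq> L" "independent B" "L \<subseteq> span B"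
    by (rule maximal_independent_subset_extend[OF bsL ib])
  have "finite B" using independent_span_bound[OF B0(1) B(3)] B(2) B0(3) by auto
  then obtain e where e: "set e = B - set bs" "distinct e" using finite_distinct_list[of "B - set bs"] by auto
  have "span B = L" by (rule span_subspace) (use B assms(3) in auto)
  moreover have "set (bs @ e) = B" using e B by auto
  moreover have "distinct (bs @ e)" using e assms(1) unfolding blist_def by auto
  ultimately show ?thesis using B unfolding blist_def by (intro exI[of _ e]) auto
qed

lemma bmat_line:
  assumes la: "lie_algebra scale br L" and bs: "blist scale bs V" and VL: "V \<subseteq> L"
    and X: "subspace X" "X \<subseteq> L" and XV: "\<And>u v. u \<in> X \<Longrightarrow> v \<in> V \<Longrightarrow> br u v \<in> V"
    and x: "x \<in> X" and y: "y \<in> X"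
  shows "bmat scale bs (br ((1 - t) *s x + t *s y)) =
    mat (length bs) (length bs) (\<lambda>ij. (1 - t) * bmat scale bs (br x) $$ ij + t * bmat scale bs (br y) $$ ij)"
proof (rule eq_matI)
  have i: "independent (set bs)" and s: "span (set bs) = V" using bs unfolding blist_def by auto
  fix i j assume "i < dim_row (mat (length bs) (length bs) (\<lambda>ij. (1 - t) * bmat scale bs (br x) $$ ij + t * bmat scale bs (br y) $$ ij))"
    "j < dim_col (mat (length bs) (length bs) (\<lambda>ij. (1 - t) * bmat scale bs (br x) $$ ij + t * bmat scale bs (br y) $$ ij))"
  hence i': "i < length bs" and j: "j < length bs" by auto
  have bj: "bs ! j \<in> V" "bs ! j \<in> L" using blist_in[OF bs j] VL by auto
  have xL: "(1 - t) *s x \<in> L" "t *s y \<in> L" using X x y subspace_scale by blast+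
  have xX: "(1 - t) *s x \<in> X" "t *s y \<in> X" using X x y subspace_scale by blast+
  have "br ((1 - t) *s x + t *s y) (bs ! j) = (1 - t) *s br x (bs!j) + t *s br y (bs!j)"
  proof -
    have "x \<in> L" "y \<in> L" using x y X by auto
    thus ?thesis using la xL bj unfolding lie_algebra_def by auto
  qed
  moreover have m: "br x (bs!j) \<in> span (set bs)" "br y (bs!j) \<in> span (set bs)" using XV x y bj s by auto
  ultimately have "representation (set bs) (br ((1 - t) *s x + t *s y) (bs ! j)) (bs!i)
      = (1 - t) * representation (set bs) (br x (bs!j)) (bs!i) + t * representation (set bs) (br y (bs!j)) (bs!i)"
    using m by (simp add: representation_add[OF i] representation_scale[OF i] span_scale)
  thus "bmat scale bs (br ((1 - t) *s x + t *s y)) $$ (i,j) = mat (length bs) (length bs) (\<lambda>ij. (1 - t) * bmat scale bs (br x) $$ ij + t * bmat scale bs (br y) $$ ij) $$ (i,j)"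
    using i' j by (simp add: bmat_def)
qed (auto simp: bmat_def)

end

definition low :: "'a::zero poly \<Rightarrow> nat" where "low p = (LEAST i. coeff p i \<noteq> 0)"

lemma low_le: "coeff p i \<noteq> 0 \<Longrightarrow> low p \<le> i"
  unfolding low_def by (rule Least_le)

lemma coeff_low: "p \<noteq> 0 \<Longrightarrow> coeff p (low p) \<noteq> 0"
  unfolding low_def by (rule LeastI[of _ "degree p"]) simp

lemma below_low: "i < low p \<Longrightarrow> coeff p i = 0"
  unfolding low_def using not_less_Least by blast

lemma coeff_mult_below:
  fixes p q :: "'a::idom poly"
  assumes "i < low p + low q"
  shows "coeff (p * q) i = 0"
  unfolding coeff_mult
proof (rule sum.neutral, intro ballI)
  fix j assume "j \<in> {..i}"
  show "coeff p j * coeff q (i - j) = 0"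
  proof (cases "j < low p")
    case True thus ?thesis by (simp add: below_low)
  next
    case False
    hence "i - j < low q" using assms \<open>j \<in> {..i}\<close> by auto
    thus ?thesis by (simp add: below_low)
  qed
qed

lemma coeff_mult_low:
  fixes p q :: "'a::idom poly"
  assumes p: "p \<noteq> 0" and q: "q \<noteq> 0"
  shows "coeff (p * q) (low p + low q) \<noteq> 0"
proof -
  have "coeff (p * q) (low p + low q) = (\<Sum>j\<le>low p + low q. if j = low p then coeff p (low p) * coeff q (low q) else 0)"
    unfolding coeff_mult
  proof (rule sum.cong[OF refl])
    fix j assume "j \<in> {..low p + low q}"
    hence j: "j \<le> low p + low q" by simp
    show "coeff p j * coeff q (low p + low q - j) = (if j = low p then coeff p (low p) * coeff q (low q) else 0)"
    proof (cases "j < low p")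
      case True thus ?thesis by (simp add: below_low)
    next
      case False
      show ?thesis
      proof (cases "j = low p")
        case True thus ?thesis by simp
      next
        case False2: False
        hence "low p + low q - j < low q" using False j by linarith
        thus ?thesis using False2 by (simp add: below_low)
      qed
    qed
  qed
  also have "\<dots> = coeff p (low p) * coeff q (low q)" by simp
  finally show ?thesis using coeff_low[OF p] coeff_low[OF q] by simp
qed


context vector_space begin

lemma main:
  fixes br :: "'b \<Rightarrow> 'b \<Rightarrow> 'b" and L S :: "'b set"
  assumes inf: "infinite (UNIV :: 'a set)"
    and la: "lie_algebra scale br L"
    and reg: "regular_lie_algebra scale br L"
    and sa: "lie_subalgebra scale br S L"
  shows "regular_lie_algebra scale br S"
proof -
  have Lsub: "subspace L" and fd: "fin_dim scale L" using la unfolding lie_algebra_def by auto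
  have SL: "S \<subseteq> L" and Ssub: "subspace S" and Sbr: "\<And>x y. x \<in> S \<Longrightarrow> y \<in> S \<Longrightarrow> br x y \<in> S"
    using sa unfolding lie_subalgebra_def by auto
  have Lbr: "\<And>x y. x \<in> L \<Longrightarrow> y \<in> L \<Longrightarrow> br x y \<in> L" using la unfolding lie_algebra_def by auto
  define bS where "bS = some_basis scale S"
  define bL where "bL = some_basis scale L"
  have bSb: "blist scale bS S" unfolding bS_def by (rule some_basis_ok[OF Ssub SL fd])
  have bLb: "blist scale bL L" unfolding bL_def by (rule some_basis_ok[OF Lsub order_refl fd])
  obtain e where cb: "blist scale (bS @ e) L" using basis_extend[OF bSb SL Lsub fd] by blast
  define c where "c = bS @ e"
  define m where "m = length bS"
  define d where "d = length e"
  define Dm where "Dm x = mat d d (\<lambda>(i,j). bmat scale c (br x) $$ (i + m, j + m))" for x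
  have lin: "linon scale L (br x)" if "x \<in> L" for x
    using la that unfolding lie_algebra_def linon_def by auto
  have chiS: "chi_ad scale br S x = char_poly (bmat scale bS (br x))" for x
    unfolding chi_ad_def endo_matrix_def bmat_def bS_def Let_def ..
  have chiL: "chi_ad scale br L x = char_poly (bmat scale bS (br x)) * char_poly (Dm x)" if x: "x \<in> S" for x
  proof -
    have xL: "x \<in> L" using x SL by auto
    have "chi_ad scale br L x = char_poly (bmat scale bL (br x))"
      unfolding chi_ad_def endo_matrix_def bmat_def bL_def Let_def ..
    also have "\<dots> = char_poly (bmat scale c (br x))"
      unfolding c_def by (rule char_poly_bmat[OF bLb cb lin[OF xL]])
    also have "bmat scale c (br x) = four_block_mat (bmat scale bS (br x))
      (mat m d (\<lambda>(i,j). bmat scale c (br x) $$ (i, j + m))) (0\<^sub>m d m) (Dm x)"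
      unfolding c_def m_def d_def Dm_def
      by (rule bmat_block[OF cb bSb lin[OF xL]]) (use Sbr x in auto)
    also have "char_poly \<dots> = char_poly (bmat scale bS (br x)) * char_poly (Dm x)"
      by (rule char_poly_block) (auto simp: bmat_def m_def Dm_def)
    finally show ?thesis .
  qed
  have DmC: "Dm x \<in> carrier_mat d d" for x by (simp add: Dm_def)
  have BmC: "bmat scale bS (br x) \<in> carrier_mat m m" for x by (simp add: bmat_def m_def)
  have nzS: "chi_ad scale br S x \<noteq> 0" for x
    using degree_monic_char_poly[OF BmC[of x]] chiS[of x] by auto
  have nzD: "char_poly (Dm x) \<noteq> 0" for x
    using degree_monic_char_poly[OF DmC[of x]] by auto
  define s0 where "s0 = lie_rank scale br S"
  define rL where "rL = lie_rank scale br L"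
  have rL_le: "rL \<le> j" if "z \<in> L" "coeff (chi_ad scale br L z) j \<noteq> 0" for z j
    unfolding rL_def lie_rank_def using that by (intro Least_le) blast
  have s0_le: "s0 \<le> j" if "z \<in> S" "coeff (chi_ad scale br S z) j \<noteq> 0" for z j
    unfolding s0_def lie_rank_def using that by (intro Least_le) blast
  have "\<exists>r. \<exists>x\<in>S. coeff (chi_ad scale br S x) r \<noteq> 0"
    using coeff_low[OF nzS[of 0]] subspace_0[OF Ssub] by blast
  from LeastI_ex[OF this] obtain x1 where x1: "x1 \<in> S" "coeff (chi_ad scale br S x1) s0 \<noteq> 0"
    unfolding s0_def lie_rank_def by blast
  show ?thesis unfolding regular_lie_algebra_def regular_element_def
  proof (intro ballI impI, fold s0_def, rule ccontr)
    fix y assume y: "y \<in> S" "y \<noteq> 0" and ny: "\<not> coeff (chi_ad scale br S y) s0 \<noteq> 0"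
    define a where "a = low (chi_ad scale br S y)"
    define b where "b = low (char_poly (Dm y))"
    have "s0 \<le> a" unfolding a_def using s0_le[OF y(1) coeff_low[OF nzS]] .
    moreover have "a \<noteq> s0" using ny coeff_low[OF nzS[of y]] unfolding a_def by auto
    ultimately have as0: "s0 < a" by simp
    have "coeff (chi_ad scale br L y) rL \<noteq> 0"
      using reg y SL unfolding regular_lie_algebra_def regular_element_def rL_def by auto
    hence "\<not> rL < a + b" using coeff_mult_below[of rL "chi_ad scale br S y" "char_poly (Dm y)"]
      chiL[OF y(1)] chiS[of y] unfolding a_def b_def by auto
    hence sb: "s0 + b < rL" using as0 by simp
    define z where "z t = (1 - t) *s x1 + t *s y" for t
    have zS: "z t \<in> S" for t unfolding z_def using Ssub x1(1) y(1)
      by (intro subspace_add subspace_scale) auto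
    have SS: "\<And>u v. u \<in> S \<Longrightarrow> v \<in> S \<Longrightarrow> br u v \<in> S" using Sbr by auto
    have SL': "\<And>u v. u \<in> S \<Longrightarrow> v \<in> L \<Longrightarrow> br u v \<in> L" using Lbr SL by auto
    have lineS: "bmat scale bS (br (z t)) = mat m m (\<lambda>ij. (1 - t) * bmat scale bS (br x1) $$ ij + t * bmat scale bS (br y) $$ ij)" for t
      unfolding z_def m_def by (rule bmat_line[OF la bSb SL Ssub SL SS x1(1) y(1)])
    have lineC: "bmat scale c (br (z t)) = mat (m + d) (m + d) (\<lambda>ij. (1 - t) * bmat scale c (br x1) $$ ij + t * bmat scale c (br y) $$ ij)" for t
      unfolding z_def m_def d_def c_def using bmat_line[OF la cb order_refl Ssub SL SL' x1(1) y(1)] by simp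
    have lineD: "Dm (z t) = mat d d (\<lambda>ij. (1 - t) * Dm x1 $$ ij + t * Dm y $$ ij)" for t
      by (rule eq_matI) (auto simp: Dm_def lineC)
    obtain pS where pS: "\<And>t. coeff (char_poly (mat m m (\<lambda>ij. (1 - t) * bmat scale bS (br x1) $$ ij + t * bmat scale bS (br y) $$ ij))) s0 = poly pS t"
      using char_poly_line[OF BmC BmC] by blast
    obtain pD where pD: "\<And>t. coeff (char_poly (mat d d (\<lambda>ij. (1 - t) * Dm x1 $$ ij + t * Dm y $$ ij))) b = poly pD t"
      using char_poly_line[OF DmC DmC] by blast
    have pS': "coeff (chi_ad scale br S (z t)) s0 = poly pS t" for t
      using pS[of t] chiS[of "z t"] lineS[of t] by simp
    have pD': "coeff (char_poly (Dm (z t))) b = poly pD t" for t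
      using pD[of t] lineD[of t] by simp
    have z0: "z 0 = x1" and z1: "z 1 = y" unfolding z_def by simp_all
    have "poly pS 0 \<noteq> 0" using pS'[of 0] z0 x1(2) by simp
    hence "pS \<noteq> 0" by auto
    have "poly pD 1 \<noteq> 0" using pD'[of 1] z1 coeff_low[OF nzD[of y]] unfolding b_def by simp
    hence "pD \<noteq> 0" by auto
    with \<open>pS \<noteq> 0\<close> have "pS * pD \<noteq> 0" by simp
    have "\<exists>t. poly (pS * pD) t \<noteq> 0"
    proof (rule ccontr)
      assume "\<not> ?thesis"
      hence "{t. poly (pS * pD) t = 0} = UNIV" by auto
      with poly_roots_finite[OF \<open>pS * pD \<noteq> 0\<close>] inf show False by (metis (no_types, lifting))
    qed
    then obtain t where t: "poly pS t \<noteq> 0" "poly pD t \<noteq> 0" by auto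
    have c1: "coeff (chi_ad scale br S (z t)) s0 \<noteq> 0" using t pS' by simp
    have c2: "coeff (char_poly (Dm (z t))) b \<noteq> 0" using t pD' by simp
    have "coeff (chi_ad scale br L (z t)) (low (chi_ad scale br S (z t)) + low (char_poly (Dm (z t)))) \<noteq> 0"
      using coeff_mult_low[OF nzS nzD] chiL[OF zS] chiS by simp
    hence "rL \<le> low (chi_ad scale br S (z t)) + low (char_poly (Dm (z t)))"
      using rL_le zS SL by blast
    moreover have "low (chi_ad scale br S (z t)) \<le> s0" by (rule low_le[OF c1])
    moreover have "low (char_poly (Dm (z t))) \<le> b" by (rule low_le[OF c2])
    ultimately show False using sb by simp
  qed
qed

end

theorem lemma2:
  fixes scale :: "'k::field \<Rightarrow> 'v::ab_group_add \<Rightarrow> 'v"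
    and br :: "'v \<Rightarrow> 'v \<Rightarrow> 'v"
    and L S :: "'v set"
  assumes "infinite (UNIV :: 'k set)"
    and "vector_space scale"
    and "lie_algebra scale br L"
    and "regular_lie_algebra scale br L"
    and "lie_subalgebra scale br S L"
  shows "regular_lie_algebra scale br S"
  using vector_space.main[OF assms(2) assms(1) assms(3) assms(4) assms(5)] .

end
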